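(* For all $m\ge 1$ and all $n\ge m$, $$d_1(W_{n,m},D)\ge \frac{2\big(|m-2|\log n-|(m+2)h_m-3|\big)}{n},$$ where $W_{n,m}=\frac1n C_{n,m}-1$, $C_{n,m}$ is the number of comparisons made by Quickselect to find the $m$-th smallest element of a list of $n$ distinct numbers, $D$ has the standard Dickman distribution, and $h_k=\sum_{j=1}^k 1/j$.
   Context: Quickselect (to find the $m$-th smallest element of a list of $n\ge m$ distinct numbers): a pivot is chosen uniformly at random from the list and compared with each of the other $n-1$ elements; the elements smaller than the pivot form the left sublist and those larger form the right sublist. If the left sublist has size $m-1$, the pivot is the answer and the procedure stops; if it has size $\ge m$, the procedure recurses on the left sublist to find its $m$-th smallest element; otherwise (left size $L<m-1$) it recurses on the right sublist to find its $(m-L-1)$-th smallest element. All pivot choices are independent. The standard Dickman distribution is the unique law of a non-negative random variable $D$ satisfying $D=_d U(D+1)$, where $U\sim\mathcal U[0,1]$ is independent of $D$. The Wasserstein distance is $d_1(X,Y)=\sup_{h\in \mathrm{Lip}_1}|Eh(X)-Eh(Y)|$, where $\mathrm{Lip}_1=\{h:|h(y)-h(x)|\le|y-x|\}$. *)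

theory Defs
  imports "HOL-Probability.Probability"
begin

text \<open>The pivot has rank k, uniform on {1..n}; the left
sublist has size L = k-1.  n-1 comparisons are made; if L = m-1 stop; if L \<ge> m recurse
on the left sublist (size k-1, same m); otherwise recurse on the right sublist
(size n-k, looking for the (m-L-1) = (m-k)-th smallest).  Degenerate arguments
(n = 0, or m outside 1..n) never arise from valid calls; they are mapped to 0.\<close>

function quickselect_cmp :: "nat \<Rightarrow> nat \<Rightarrow> nat pmf" where
  "quickselect_cmp n m =
     (if n = 0 \<or> m = 0 \<or> m > n then return_pmf 0
      else pmf_of_set {1..n} \<bind> (\<lambda>k.
        if k = m then return_pmf (n - 1)
        else if k > m then map_pmf (\<lambda>c. (n - 1) + c) (quickselect_cmp (k - 1) m)
        else map_pmf (\<lambda>c. (n - 1) + c) (quickselect_cmp (n - k) (m - k))))"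
  by pat_completeness auto
termination
  by (relation "Wellfounded.measure fst") (auto simp: set_pmf_of_set)

definition W_law :: "nat \<Rightarrow> nat \<Rightarrow> real measure" where
  "W_law n m = measure_pmf (map_pmf (\<lambda>c. real c / real n - 1) (quickselect_cmp n m))"

definition is_dickman :: "real measure \<Rightarrow> bool" where
  "is_dickman M \<longleftrightarrow> prob_space M \<and> sets M = sets borel \<and> (AE x in M. 0 \<le> x) \<and>
     M = distr (uniform_measure lborel {0..1} \<Otimes>\<^sub>M M) borel (\<lambda>(u, d). u * (d + 1))"

definition Lip1 :: "(real \<Rightarrow> real) set" where
  "Lip1 = {h. \<forall>x y. \<bar>h y - h x\<bar> \<le> \<bar>y - x\<bar>}"

definition wasserstein1 :: "real measure \<Rightarrow> real measure \<Rightarrow> ereal" where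
  "wasserstein1 P Q = (SUP h\<in>Lip1. ereal \<bar>(\<integral>x. h x \<partial>P) - (\<integral>x. h x \<partial>Q)\<bar>)"

end

theory Submission imports Defs begin


lemma qs_finite: "finite (set_pmf (quickselect_cmp n m))"
proof (induction n m rule: quickselect_cmp.induct)
  case (1 n m)
  show ?case
    apply (subst quickselect_cmp.simps)
    using 1 by (auto simp: set_pmf_of_set intro!: finite_UN_I)
qed

declare quickselect_cmp.simps[simp del]

lemma qs_unf: "1 \<le> m \<Longrightarrow> m \<le> n \<Longrightarrow> quickselect_cmp n m = pmf_of_set {1..n} \<bind> (\<lambda>k.
        if k = m then return_pmf (n - 1)
        else if k > m then map_pmf (\<lambda>c. (n - 1) + c) (quickselect_cmp (k - 1) m)
        else map_pmf (\<lambda>c. (n - 1) + c) (quickselect_cmp (n - k) (m - k)))"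
  by (subst quickselect_cmp.simps) simp

definition e :: "nat \<Rightarrow> nat \<Rightarrow> real" where
  "e n m = measure_pmf.expectation (quickselect_cmp n m) real"

lemma e_rec:
  assumes "1 \<le> m" "m \<le> n"
  shows "e n m = (\<Sum>k\<in>{1..n}. (if k = m then real n - 1 else if k > m then real n - 1 + e (k-1) m
              else real n - 1 + e (n-k) (m-k))) / real n"
proof -
  have ne: "{1..n} \<noteq> {}" using assms by auto
  have "e n m = measure_pmf.expectation (pmf_of_set {1..n} \<bind> (\<lambda>k.
        if k = m then return_pmf (n - 1)
        else if k > m then map_pmf (\<lambda>c. (n - 1) + c) (quickselect_cmp (k - 1) m)
        else map_pmf (\<lambda>c. (n - 1) + c) (quickselect_cmp (n - k) (m - k)))) real"
    unfolding e_def using assms by (simp only: qs_unf)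
  also have "\<dots> = (\<Sum>k\<in>{1..n}. measure_pmf.expectation (
        if k = m then return_pmf (n - 1)
        else if k > m then map_pmf (\<lambda>c. (n - 1) + c) (quickselect_cmp (k - 1) m)
        else map_pmf (\<lambda>c. (n - 1) + c) (quickselect_cmp (n - k) (m - k))) real /\<^sub>R real (card {1..n}))"
    by (rule pmf_expectation_bind_pmf_of_set) (use ne qs_finite in auto)
  also have "\<dots> = (\<Sum>k\<in>{1..n}. (if k = m then real n - 1 else if k > m then real n - 1 + e (k-1) m
              else real n - 1 + e (n-k) (m-k)) / real n)"
  proof (rule sum.cong)
    fix k assume "k \<in> {1..n}"
    have int: "\<And>a b. integrable (measure_pmf (quickselect_cmp a b)) real"
      by (rule integrable_measure_pmf_finite) (rule qs_finite)
    show "measure_pmf.expectation (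
        if k = m then return_pmf (n - 1)
        else if k > m then map_pmf (\<lambda>c. (n - 1) + c) (quickselect_cmp (k - 1) m)
        else map_pmf (\<lambda>c. (n - 1) + c) (quickselect_cmp (n - k) (m - k))) real /\<^sub>R real (card {1..n})
      = (if k = m then real n - 1 else if k > m then real n - 1 + e (k-1) m
              else real n - 1 + e (n-k) (m-k)) / real n"
    proof (cases "k = m")
      case True then show ?thesis using assms by (simp add: of_nat_diff divide_inverse mult.commute)
    next
      case False
      have cn: "real (card {1..n}) = real n" by simp
      have eq: "\<And>a b. measure_pmf.expectation (map_pmf (\<lambda>c. (n - 1) + c) (quickselect_cmp a b)) real
            = real n - 1 + e a b"
      proof -
        fix a b
        have "measure_pmf.expectation (map_pmf (\<lambda>c. (n - 1) + c) (quickselect_cmp a b)) real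
            = measure_pmf.expectation (quickselect_cmp a b) (\<lambda>c. (real n - 1) + real c)"
          using assms by (simp add: of_nat_diff algebra_simps)
        also have "\<dots> = real n - 1 + e a b"
          using int[of a b] by (simp add: e_def measure_pmf.prob_space)
        finally show "measure_pmf.expectation (map_pmf (\<lambda>c. (n - 1) + c) (quickselect_cmp a b)) real
            = real n - 1 + e a b" .
      qed
      show ?thesis using False unfolding cn by (simp only: if_False eq split: if_splits) (simp_all add: divide_inverse)
    qed
  qed simp
  finally show ?thesis by (simp add: sum_divide_distrib)
qed



definition F :: "nat \<Rightarrow> nat \<Rightarrow> real" where
  "F n m = 2*(real n + 3 + (real n+1)*harm n - (real m+2)*harm m - (real n + 3 - real m)*harm (n+1-m))"

lemma harm1: "harm (Suc 0) = (1::real)" by (simp add: harm_def)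

lemma Fjj: "F j j = 2 * (real j - harm j)"
  by (simp add: F_def harm1 algebra_simps)

lemma sumH: "(\<Sum>j\<le>n. harm j) = (real n+1)*harm n - real n"
proof (induction n)
  case 0 then show ?case by (simp add: harm_def)
next
  case (Suc n)
  have "(\<Sum>j\<le>Suc n. harm j) = (real n+1)*harm n - real n + harm (Suc n)" using Suc by simp
  then show ?case by (simp add: harm_Suc field_simps)
qed

lemma base_id: "1 \<le> m \<Longrightarrow> real m * F m m = real m * (real m - 1) + (\<Sum>k\<in>{1..<m}. F (m-k) (m-k))"
proof -
  assume m: "1 \<le> m"
  have "(\<Sum>k\<in>{1..<m}. F (m-k) (m-k)) = (\<Sum>k\<in>{1..m-1}. F (m-k) (m-k))"
    using m by (intro sum.cong) auto
  also have "\<dots> = (\<Sum>k\<in>{1..m-1}. F (m - (m - 1 + 1 - k)) (m - (m - 1 + 1 - k)))"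
    by (subst sum.atLeastAtMost_rev) simp
  also have "\<dots> = (\<Sum>k\<in>{1..m-1}. F k k)"
    using m by (intro sum.cong) auto
  also have "\<dots> = (\<Sum>k\<in>{1..m-1}. 2 * (real k - harm k))" by (simp add: Fjj)
  also have "\<dots> = 2 * ((\<Sum>k\<in>{1..m-1}. real k) - (\<Sum>k\<in>{1..m-1}. harm k))"
    by (simp add: sum_subtractf sum_distrib_left)
  also have "(\<Sum>k\<in>{1..m-1}. harm k) = (\<Sum>k\<le>m-1. (harm k::real))"
  proof -
    have "{..m-1} = insert 0 {1..m-1}" by auto
    then show ?thesis by (simp add: harm_def)
  qed
  also have "(\<Sum>k\<in>{1..m-1}. real k) = (\<Sum>k\<le>m-1. real k)"
  proof -
    have "{..m-1} = insert 0 {1..m-1}" by auto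
    then show ?thesis by simp
  qed
  finally have S: "(\<Sum>k\<in>{1..<m}. F (m-k) (m-k)) = 2 * ((\<Sum>k\<le>m-1. real k) - (\<Sum>k\<le>m-1. harm k))" .
  obtain p where p: "m = Suc p" using m by (cases m) auto
  have g: "(\<Sum>k\<le>p. real k) = real p * (real p + 1) / 2"
    by (induction p) (simp_all add: field_simps)
  show ?thesis unfolding S using p
    by (simp add: Fjj sumH g harm_Suc field_simps)
qed

lemma DF: "M \<le> N + 1 \<Longrightarrow> F (Suc N) M - F N M = 2*(1 + harm (N+1) - harm (N+2-M) - 1/(real N+2-real M))"
proof -
  assume a: "M \<le> N + 1"
  then obtain b where b: "N + 1 = M + b" using le_Suc_ex by blast
  then have e1: "Suc N + 1 - M = Suc b" "N+2-M = Suc b" "N + 1 - M = b" by auto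
  have r: "real N = real M + real b - 1" using arg_cong[OF b, of real] by simp
  have r2: "real N + 2 - real M = real b + 1" using r by simp
  have k1: "(real N + 2)*harm (Suc N) - (real N + 1)*harm N = harm (Suc N) + 1"
    by (simp add: harm_Suc field_simps)
  have k2: "(real b + 3)*harm (Suc b) - (real b + 2)*harm b = harm (Suc b) + 1 + 1/(real b+1)"
    by (simp add: harm_Suc field_simps)
  have r3: "real N + 3 - real M = real b + 2" "real (Suc N) + 3 - real M = real b + 3" using r by auto
  have "F (Suc N) M - F N M = 2*(1 + ((real N + 2)*harm (Suc N) - (real N + 1)*harm N)
      - ((real b + 3)*harm (Suc b) - (real b + 2)*harm b))"
    unfolding F_def e1 r3 by (simp add: algebra_simps)
  then show ?thesis unfolding k1 k2 e1 r2 by simp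
qed

lemma SH: "1 \<le> m \<Longrightarrow> m \<le> n + 1 \<Longrightarrow> (\<Sum>k\<in>{1..<m}. harm (n+1-k)) =
   ((real n+1)*harm n - real n) - ((real (n+1-m)+1)*harm (n+1-m) - real (n+1-m))"
proof (induction m rule: nat_induct_at_least)
  case base then show ?case by simp
next
  case (Suc m)
  have IH: "(\<Sum>k\<in>{1..<m}. harm (n+1-k)) =
   ((real n+1)*harm n - real n) - ((real (n+1-m)+1)*harm (n+1-m) - real (n+1-m))"
    using Suc by simp
  obtain b where b: "n = m + b" using Suc by (metis le_Suc_ex Suc_le_mono add_Suc_right Suc_eq_plus1)
  then have e1: "n + 1 - m = Suc b" "n + 1 - Suc m = b" by auto
  have "(\<Sum>k\<in>{1..<Suc m}. harm (n+1-k)) = (\<Sum>k\<in>{1..<m}. harm (n+1-k)) + harm (n+1-m)"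
    using Suc by simp
  also have "\<dots> = ((real n+1)*harm n - real n) - ((real b+1)*harm b - real b)"
  proof -
    have k: "(real b+1)*harm (Suc b) = (real b+1)*harm b + 1" by (simp add: harm_Suc field_simps)
    show ?thesis unfolding IH e1 using k by (simp add: algebra_simps)
  qed
  finally show ?case unfolding e1 .
qed

lemma arX: "(n::real)*a + a = 1 \<Longrightarrow> q*b + b = 1 \<Longrightarrow> (n+1)*(2*(1 + (hn + a) - (hq + b) - b)) =
     2*n + 2*((n + 1 - q)-1)*(1 - (hq + b) - b) + 2*((n+1)*hn - n - ((q+1)*hq - q))"
  by (simp add: algebra_simps)

lemma ID: "1 \<le> m \<Longrightarrow> m \<le> n \<Longrightarrow>
  real n * F n m = real n * (real n - 1) + (\<Sum>j\<in>{m..<n}. F j m) + (\<Sum>k\<in>{1..<m}. F (n-k) (m-k))"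
  apply (rotate_tac 1)
proof (induction n rule: dec_induct)
  case base then show ?case using base_id[of m] by simp
next
  case (step n)
  have s1: "(\<Sum>j\<in>{m..<Suc n}. F j m) = (\<Sum>j\<in>{m..<n}. F j m) + F n m" using step by simp
  have "(\<Sum>k\<in>{1..<m}. F (Suc n-k) (m-k)) = (\<Sum>k\<in>{1..<m}. F (n-k) (m-k) + (F (Suc (n-k)) (m-k) - F (n-k) (m-k)))"
    using step by (intro sum.cong) (auto simp: Suc_diff_le)
  also have "\<dots> = (\<Sum>k\<in>{1..<m}. F (n-k) (m-k)) + (\<Sum>k\<in>{1..<m}. 2*(1 + harm (n+1-k) - harm (n+2-m) - 1/(real n+2-real m)))"
  proof -
    have "(\<Sum>k\<in>{1..<m}. (F (Suc (n-k)) (m-k) - F (n-k) (m-k))) = (\<Sum>k\<in>{1..<m}. 2*(1 + harm (n+1-k) - harm (n+2-m) - 1/(real n+2-real m)))"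
    proof (intro sum.cong refl)
      fix k assume k: "k \<in> {1..<m}"
      then have "F (Suc (n-k)) (m-k) - F (n-k) (m-k) = 2*(1 + harm (n-k+1) - harm (n-k+2-(m-k)) - 1/(real (n-k)+2-real (m-k)))"
        using step by (intro DF) auto
      moreover have "n-k+1 = n+1-k" "n-k+2-(m-k) = n+2-m" "real (n-k)+2-real (m-k) = real n+2-real m"
        using k step by (auto simp: of_nat_diff)
      ultimately show "F (Suc (n-k)) (m-k) - F (n-k) (m-k) = 2*(1 + harm (n+1-k) - harm (n+2-m) - 1/(real n+2-real m))" by simp
    qed
    note dd = this
    show ?thesis unfolding sum.distrib dd ..
  qed
  also have "(\<Sum>k\<in>{1..<m}. 2*(1 + harm (n+1-k) - harm (n+2-m) - 1/(real n+2-real m))) =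
     2*(real m - 1)*(1 - harm (n+2-m) - 1/(real n+2-real m)) + 2*(\<Sum>k\<in>{1..<m}. harm (n+1-k))"
    using step by (simp add: sum.distrib sum_subtractf sum_distrib_left[symmetric] algebra_simps of_nat_diff)
  finally have s2: "(\<Sum>k\<in>{1..<m}. F (Suc n-k) (m-k)) = (\<Sum>k\<in>{1..<m}. F (n-k) (m-k)) +
     (2*(real m - 1)*(1 - harm (n+2-m) - 1/(real n+2-real m)) + 2*(\<Sum>k\<in>{1..<m}. harm (n+1-k)))" .
  have d: "F (Suc n) m - F n m = 2*(1 + harm (n+1) - harm (n+2-m) - 1/(real n+2-real m))"
    using step by (intro DF) auto
  have sh: "(\<Sum>k\<in>{1..<m}. harm (n+1-k)) =
   ((real n+1)*harm n - real n) - ((real (n+1-m)+1)*harm (n+1-m) - real (n+1-m))"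
    using step by (intro SH) auto
  obtain q where q: "n + 1 = m + q" using step by (metis le_Suc_ex le_SucI Suc_eq_plus1)
  have rq: "real q = real n + 1 - real m" using arg_cong[OF q, of real] by simp
  have e2: "n+2-m = Suc q" "n+1-m = q" using q by auto
  have hq: "harm (Suc q) = harm q + 1/(real q+1)" by (simp add: harm_Suc inverse_eq_divide add.commute)
  have hn: "harm (n+1) = harm n + 1/(real n+1)" by (simp add: harm_Suc inverse_eq_divide add.commute)
  have r2: "real n + 2 - real m = real q + 1" using rq by simp
  have ar: "(real n+1)*(2*(1 + (harm n + 1/(real n+1)) - (harm q + 1/(real q+1)) - 1/(real q+1))) =
     2*real n + 2*(real m-1)*(1 - (harm q + 1/(real q+1)) - 1/(real q+1)) + 2*((real n+1)*harm n - real n - ((real q+1)*harm q - real q))"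
  proof -
    have p1: "real n + 1 > 0" "real q + 1 > 0" by auto
    have rm: "real m = real n + 1 - real q" using rq by simp
    show ?thesis unfolding rm by (rule arX) (use p1 in \<open>simp_all add: field_simps\<close>)
  qed
  have spl: "real (Suc n) * F (Suc n) m = real n * F n m + F n m + (real n + 1)*(F(Suc n) m - F n m)"
    by (simp add: algebra_simps)
  show ?case unfolding spl s1 s2 sh d e2 hq hn r2
    using step.IH step.prems ar unfolding e2 hq hn r2 rq by (simp add: algebra_simps; linarith)
qed



lemma split_sum:
  assumes "1 \<le> m" "m \<le> n"
  shows "(\<Sum>k\<in>{1..n}. (if k = m then real n - 1 else if k > m then real n - 1 + F (k-1) m
              else real n - 1 + F (n-k) (m-k))) = real n * (real n - 1) + (\<Sum>j\<in>{m..<n}. F j m) + (\<Sum>k\<in>{1..<m}. F (n-k) (m-k))"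
proof -
  define h where "h k = (if k = m then 0 else if k > m then F (k-1) m else F (n-k) (m-k))" for k
  have "(\<Sum>k\<in>{1..n}. (if k = m then real n - 1 else if k > m then real n - 1 + F (k-1) m
              else real n - 1 + F (n-k) (m-k))) = (\<Sum>k\<in>{1..n}. (real n - 1) + h k)"
    by (intro sum.cong) (auto simp: h_def)
  also have "\<dots> = real n * (real n - 1) + (\<Sum>k\<in>{1..<Suc n}. h k)"
    by (simp add: sum.distrib atLeastLessThanSuc_atLeastAtMost)
  also have "(\<Sum>k\<in>{1..<Suc n}. h k) = (\<Sum>k\<in>{1..<m}. h k) + (\<Sum>k\<in>{m..<Suc n}. h k)"
    using assms by (intro sum.atLeastLessThan_concat[symmetric]) auto
  also have "(\<Sum>k\<in>{m..<Suc n}. h k) = h m + (\<Sum>k\<in>{Suc m..<Suc n}. h k)"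
    using assms by (intro sum.atLeast_Suc_lessThan) auto
  also have "(\<Sum>k\<in>{Suc m..<Suc n}. h k) = (\<Sum>k\<in>{m..<n}. h (Suc k))"
    by (rule sum.shift_bounds_Suc_ivl)
  also have "\<dots> = (\<Sum>j\<in>{m..<n}. F j m)" by (intro sum.cong) (auto simp: h_def)
  also have "(\<Sum>k\<in>{1..<m}. h k) = (\<Sum>k\<in>{1..<m}. F (n-k) (m-k))" by (intro sum.cong) (auto simp: h_def)
  finally show ?thesis by (simp add: h_def)
qed

lemma e_eq_F: "1 \<le> m \<Longrightarrow> m \<le> n \<Longrightarrow> e n m = F n m"
proof (induction n arbitrary: m rule: less_induct)
  case (less n)
  have "e n m = (\<Sum>k\<in>{1..n}. (if k = m then real n - 1 else if k > m then real n - 1 + e (k-1) m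
              else real n - 1 + e (n-k) (m-k))) / real n" using less.prems by (rule e_rec)
  also have "\<dots> = (\<Sum>k\<in>{1..n}. (if k = m then real n - 1 else if k > m then real n - 1 + F (k-1) m
              else real n - 1 + F (n-k) (m-k))) / real n"
  proof (intro arg_cong[where f="\<lambda>x. x / real n"] sum.cong refl)
    fix k assume k: "k \<in> {1..n}"
    show "(if k = m then real n - 1 else if k > m then real n - 1 + e (k-1) m
              else real n - 1 + e (n-k) (m-k)) = (if k = m then real n - 1 else if k > m then real n - 1 + F (k-1) m
              else real n - 1 + F (n-k) (m-k))"
      using k less.prems by (auto simp: less.IH)
  qed
  also have "\<dots> = F n m"
  proof -
    have "real n > 0" using less.prems by simp
    then show ?thesis unfolding split_sum[OF less.prems] ID[OF less.prems, symmetric] by simp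
  qed
  finally show ?case .
qed



abbreviation U01 :: "real measure" where "U01 \<equiv> uniform_measure lborel {0..1}"

lemma ennreal_div1: "(x::ennreal) / 1 = x" unfolding divide_ennreal_def by simp

lemma U_prob: "prob_space U01"
  by (rule prob_space_uniform_measure) auto

lemma U_lin: assumes "0 \<le> c" shows "(\<integral>\<^sup>+u. ennreal (u * c) \<partial>U01) = ennreal (c/2)"
proof -
  have h: "((\<lambda>x. x * c) has_integral c/2) {0..1::real}"
    using has_integral_mult_left[OF ident_has_integral[of 0 1], of c] by (simp add: power2_eq_square)
  have "(\<integral>\<^sup>+u. ennreal (u * c) \<partial>U01) = (\<integral>\<^sup>+u. ennreal (u * c) * indicator {0..1} u \<partial>lborel) / emeasure lborel {0..1::real}"
    by (rule nn_integral_uniform_measure) auto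
  also have "\<dots> = ennreal (c/2)"
    using nn_integral_has_integral_lebesgue'[OF _ h] assms by (simp add: ennreal_div1)
  finally show ?thesis .
qed

lemma U_sets[simp]: "sets U01 = sets borel" by simp

lemma transfer:
  assumes D: "is_dickman M" and f: "f \<in> borel_measurable borel"
  shows "(\<integral>\<^sup>+x. f x \<partial>M) = (\<integral>\<^sup>+d. (\<integral>\<^sup>+u. f (u * (d+1)) \<partial>U01) \<partial>M)"
proof -
  have M: "prob_space M" "sets M = sets borel"
    and Meq: "M = distr (U01 \<Otimes>\<^sub>M M) borel (\<lambda>(u, d). u * (d + 1))"
    using D unfolding is_dickman_def by auto
  interpret P: pair_prob_space U01 M
    using U_prob M(1) by (simp add: pair_prob_space_def pair_sigma_finite_def prob_space_imp_sigma_finite)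
  have g: "(\<lambda>(u, d). u * (d + 1)) \<in> measurable (U01 \<Otimes>\<^sub>M M) (borel :: real measure)"
  proof -
    have "sets (U01 \<Otimes>\<^sub>M M) = sets (borel \<Otimes>\<^sub>M borel)"
      using M(2) by (intro sets_pair_measure_cong) auto
    then show ?thesis by (subst measurable_cong_sets[OF _ refl]) auto
  qed
  have "(\<integral>\<^sup>+x. f x \<partial>M) = (\<integral>\<^sup>+x. f x \<partial>(distr (U01 \<Otimes>\<^sub>M M) borel (\<lambda>(u, d). u * (d + 1))))"
    using Meq by (rule arg_cong)
  also have "\<dots> = (\<integral>\<^sup>+z. f ((\<lambda>(u, d). u * (d + 1)) z) \<partial>(U01 \<Otimes>\<^sub>M M))"
    using g f by (intro nn_integral_distr) auto
  also have "\<dots> = (\<integral>\<^sup>+d. (\<integral>\<^sup>+u. f ((\<lambda>(u, d). u * (d + 1)) (u,d)) \<partial>U01) \<partial>M)"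
  proof (rule P.nn_integral_snd[symmetric])
    show "(\<lambda>z. f ((\<lambda>(u, d). u * (d + 1)) z)) \<in> borel_measurable (U01 \<Otimes>\<^sub>M M)"
      using measurable_comp[OF g f] by (simp add: comp_def)
  qed
  also have "\<dots> = (\<integral>\<^sup>+d. (\<integral>\<^sup>+u. f (u * (d+1)) \<partial>U01) \<partial>M)" by simp
  finally show ?thesis .
qed

lemma inner_bound:
  assumes "0 \<le> d" "0 \<le> K"
  shows "(\<integral>\<^sup>+u. ennreal (min (max (u * (d+1)) 0) K) \<partial>U01) \<le> ennreal ((min d (2*K) + 1)/2)"
proof -
  interpret U: prob_space U01 by (rule U_prob)
  have b1: "(\<integral>\<^sup>+u. ennreal (min (max (u * (d+1)) 0) K) \<partial>U01) \<le> ennreal ((d+1)/2)"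
  proof -
    have "(\<integral>\<^sup>+u. ennreal (min (max (u * (d+1)) 0) K) \<partial>U01) \<le> (\<integral>\<^sup>+u. ennreal (u * (d+1)) \<partial>U01)"
    proof (rule nn_integral_mono)
      fix u show "ennreal (min (max (u * (d+1)) 0) K) \<le> ennreal (u * (d+1))"
      proof (cases "u * (d+1) \<ge> 0")
        case True then show ?thesis by (intro ennreal_leI) auto
      next
        case False then show ?thesis using assms by (simp add: ennreal_eq_0_iff)
      qed
    qed
    also have "\<dots> = ennreal ((d+1)/2)" using assms by (intro U_lin) auto
    finally show ?thesis .
  qed
  have b2: "(\<integral>\<^sup>+u. ennreal (min (max (u * (d+1)) 0) K) \<partial>U01) \<le> ennreal K"
  proof -
    have "(\<integral>\<^sup>+u. ennreal (min (max (u * (d+1)) 0) K) \<partial>U01) \<le> (\<integral>\<^sup>+u. ennreal K \<partial>U01)"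
      by (intro nn_integral_mono ennreal_leI) auto
    also have "\<dots> = ennreal K" by (simp add: U.emeasure_space_1)
    finally show ?thesis .
  qed
  show ?thesis
  proof (cases "d \<le> 2*K")
    case True
    then have "ennreal ((d+1)/2) \<le> ennreal ((min d (2*K) + 1)/2)" by simp
    with b1 show ?thesis by (rule order_trans)
  next
    case False
    then have "ennreal K \<le> ennreal ((min d (2*K) + 1)/2)" by (intro ennreal_leI) auto
    with b2 show ?thesis by (rule order_trans)
  qed
qed

lemma dickman_mean:
  assumes D: "is_dickman M"
  shows "integrable M (\<lambda>x. x) \<and> (\<integral>x. x \<partial>M) = 1"
proof -
  have Mp: "prob_space M" and Ms: "sets M = sets borel" and Mnn: "AE x in M. 0 \<le> x"
    using D unfolding is_dickman_def by auto
  interpret M: prob_space M by (rule Mp)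
  have bm: "\<And>f::real\<Rightarrow>real. f \<in> borel_measurable borel \<Longrightarrow> f \<in> borel_measurable M"
    by (subst measurable_cong_sets[OF Ms refl]) simp
  define g where "g K = (\<integral>x. min (max x 0) K \<partial>M)" for K
  have gint: "integrable M (\<lambda>x. min (max x 0) K)" for K
    by (rule M.integrable_const_bound[where B="\<bar>K\<bar>"]) (auto intro: bm)
  have gnn: "0 \<le> g K" if "0 \<le> K" for K unfolding g_def using that by (intro Bochner_Integration.integral_nonneg) auto
  have stepa: "g K \<le> (g (2*K) + 1)/2" if K: "0 \<le> K" for K
  proof -
    have i2: "integrable M (\<lambda>d. (min (max d 0) (2*K) + 1)/2)"
      using gint[of "2*K"] by (intro integrable_divide Bochner_Integration.integrable_add) auto
    have v2: "(\<integral>d. (min (max d 0) (2*K) + 1)/2 \<partial>M) = (g (2*K) + 1)/2"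
      using gint[of "2*K"] unfolding g_def by (simp add: Bochner_Integration.integral_add M.prob_space)
    have "ennreal (g K) = (\<integral>\<^sup>+x. ennreal (min (max x 0) K) \<partial>M)"
      unfolding g_def using K by (intro nn_integral_eq_integral[symmetric] gint) auto
    also have "\<dots> = (\<integral>\<^sup>+d. (\<integral>\<^sup>+u. ennreal (min (max (u * (d+1)) 0) K) \<partial>U01) \<partial>M)"
      by (rule transfer[OF D]) auto
    also have "\<dots> \<le> (\<integral>\<^sup>+d. ennreal ((min (max d 0) (2*K) + 1)/2) \<partial>M)"
    proof (rule nn_integral_mono_AE)
      show "AE d in M. (\<integral>\<^sup>+u. ennreal (min (max (u * (d+1)) 0) K) \<partial>U01) \<le> ennreal ((min (max d 0) (2*K) + 1)/2)"
        using Mnn by eventually_elim (use inner_bound K in auto)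
    qed
    also have "\<dots> = ennreal ((g (2*K) + 1)/2)"
      using i2 v2 K by (subst nn_integral_eq_integral) auto
    finally show ?thesis using gnn[of "2*K"] K by (subst (asm) ennreal_le_iff) auto
  qed
  have stepb: "g (2^j*K) - 1 \<ge> 2^j*(g K - 1)" if K: "0 < K" for K j
  proof (induction j)
    case 0 then show ?case by simp
  next
    case (Suc j)
    have "g (2^j*K) \<le> (g (2*(2^j*K)) + 1)/2" using K by (intro stepa) auto
    then show ?case using Suc by (simp add: mult.assoc algebra_simps)
  qed
  have stepc: "(\<lambda>j. g (2^j*K) / (2^j*K)) \<longlonglongrightarrow> 0" if K: "0 < K" for K
  proof -
    have eq: "g (2^j*K) / (2^j*K) = (\<integral>x. min (max x 0) (2^j*K) / (2^j*K) \<partial>M)" for j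
      unfolding g_def by simp
    have "(\<lambda>j. (\<integral>x. min (max x 0) (2^j*K) / (2^j*K) \<partial>M)) \<longlonglongrightarrow> (\<integral>x. 0 \<partial>M)"
    proof (rule integral_dominated_convergence[where w="\<lambda>x. 1"])
      show "AE x in M. (\<lambda>j. min (max x 0) (2^j*K) / (2^j*K)) \<longlonglongrightarrow> 0"
      proof (rule AE_I2)
        fix x
        have l: "(\<lambda>j. (max x 0 / K) * inverse (2^j)) \<longlonglongrightarrow> (max x 0 / K) * 0"
          by (intro tendsto_mult tendsto_const LIMSEQ_inverse_realpow_zero) auto
        show "(\<lambda>j. min (max x 0) (2^j*K) / (2^j*K)) \<longlonglongrightarrow> 0"
        proof (rule tendsto_sandwich[OF _ _ tendsto_const])
          show "\<forall>\<^sub>F j in sequentially. 0 \<le> min (max x 0) (2^j*K) / (2^j*K)" using K by auto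
          show "\<forall>\<^sub>F j in sequentially. min (max x 0) (2^j*K) / (2^j*K) \<le> (max x 0 / K) * inverse (2^j)"
            using K by (auto simp: field_simps intro!: divide_right_mono)
          show "(\<lambda>j. (max x 0 / K) * inverse (2^j)) \<longlonglongrightarrow> (0::real)" using l by simp
        qed
      qed
      show "AE x in M. norm (min (max x 0) (2^j*K) / (2^j*K)) \<le> 1" for j
        using K by (auto simp: field_simps)
    qed (auto intro: bm)
    then show ?thesis unfolding eq by simp
  qed
  have stepd: "g K \<le> 1" if K: "0 < K" for K
  proof -
    have l: "(\<lambda>j. g (2^j*K) / (2^j*K) - inverse K * inverse (2^j)) \<longlonglongrightarrow> 0 - inverse K * 0"
      by (intro tendsto_diff tendsto_mult stepc K tendsto_const LIMSEQ_inverse_realpow_zero) auto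
    have "(g K - 1)/K \<le> 0 - inverse K * 0"
    proof (rule LIMSEQ_le_const[OF l], intro exI allI impI)
      fix j :: nat
      have "2^j*(g K - 1) \<le> g (2^j*K) - 1" using stepb[OF K] .
      then have "2^j*(g K - 1) / (2^j*K) \<le> (g (2^j*K) - 1) / (2^j*K)"
        using K by (intro divide_right_mono) auto
      moreover have "2^j*(g K - 1) / (2^j*K) = (g K - 1)/K" by simp
      moreover have "(g (2^j*K) - 1) / (2^j*K) = g (2^j*K) / (2^j*K) - inverse K * inverse (2^j)"
        by (simp add: diff_divide_distrib inverse_eq_divide mult.commute)
      ultimately show "(g K - 1)/K \<le> g (2^j*K) / (2^j*K) - inverse K * inverse (2^j)"
        by simp
    qed
    then show ?thesis using K by (simp add: field_simps)
  qed
  have g0: "g 0 = 0" unfolding g_def by simp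
  have gle1: "g (real i) \<le> 1" for i
    by (cases "i = 0") (auto simp: g0 intro: stepd)
  have inc: "incseq (\<lambda>i. g (real i))"
    unfolding incseq_def g_def by (auto intro!: integral_mono gint)
  obtain L where L: "(\<lambda>i. g (real i)) \<longlonglongrightarrow> L" using incseq_convergent[OF inc, of 1] gle1 by blast
  have intmax: "integrable M (\<lambda>x. max x 0)"
  proof (rule integrable_monotone_convergence[where f="\<lambda>i x. min (max x 0) (real i)" and x=L])
    show "AE x in M. mono (\<lambda>n. min (max x 0) (real n))"
      by (auto simp: mono_def intro: min.mono)
    show "AE x in M. (\<lambda>i. min (max x 0) (real i)) \<longlonglongrightarrow> max x 0"
    proof (rule AE_I2, rule tendsto_eventually)
      fix x :: real
      obtain N :: nat where "max x 0 \<le> real N" using real_arch_simple by blast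
      then show "\<forall>\<^sub>F i in sequentially. min (max x 0) (real i) = max x 0"
        unfolding eventually_sequentially by (intro exI[of _ N]) auto
    qed
    show "(\<lambda>i. integral\<^sup>L M (\<lambda>x. min (max x 0) (real i))) \<longlonglongrightarrow> L" using L unfolding g_def .
  qed (auto intro: gint bm)
  have intx: "integrable M (\<lambda>x. x)"
    using intmax Mnn by (subst integrable_cong_AE[where g="\<lambda>x. max x 0"]) (auto intro: bm)
  define a where "a = (\<integral>x. x \<partial>M)"
  have a0: "0 \<le> a" unfolding a_def using Mnn by (rule integral_nonneg_AE)
  have i2: "integrable M (\<lambda>d. (d + 1)/2)"
    using intx by (intro integrable_divide Bochner_Integration.integrable_add) auto
  have v2: "(\<integral>d. (d + 1)/2 \<partial>M) = (a + 1)/2"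
    using intx unfolding a_def by (simp add: Bochner_Integration.integral_add M.prob_space)
  have "ennreal a = (\<integral>\<^sup>+x. ennreal x \<partial>M)"
    unfolding a_def using intx Mnn by (intro nn_integral_eq_integral[symmetric]) auto
  also have "\<dots> = (\<integral>\<^sup>+d. (\<integral>\<^sup>+u. ennreal (u * (d+1)) \<partial>U01) \<partial>M)"
    by (rule transfer[OF D]) auto
  also have "\<dots> = (\<integral>\<^sup>+d. ennreal ((d + 1)/2) \<partial>M)"
  proof (rule nn_integral_cong_AE)
    show "AE d in M. (\<integral>\<^sup>+u. ennreal (u * (d+1)) \<partial>U01) = ennreal ((d + 1)/2)"
      using Mnn by eventually_elim (rule U_lin, simp)
  qed
  also have "\<dots> = ennreal ((a + 1)/2)"
    using i2 v2 Mnn by (subst nn_integral_eq_integral) auto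
  finally have "a = (a+1)/2" using a0 by (subst (asm) ennreal_inj) auto
  then have "a = 1" by simp
  then show ?thesis using intx unfolding a_def by simp
qed



lemma ln_le_H: "1 \<le> n \<Longrightarrow> ln (real n) \<le> harm n"
proof -
  assume "1 \<le> n"
  then have "ln (real n) \<le> ln (real n + 1)" by simp
  also have "\<dots> \<le> harm n" by (rule ln_le_harm)
  finally show ?thesis .
qed

lemma keyA: assumes "1 \<le> m" "m \<le> n"
  shows "\<bar>real m - 2\<bar> * ln (real n) \<le> \<bar>(real n+1)*harm n - (real n + 3 - real m)*harm (n+1-m)\<bar>"
proof -
  have ln: "ln (real n) \<le> harm n" using assms by (intro ln_le_H) auto
  have lnn: "0 \<le> ln (real n)" using assms by simp
  consider "m = 1" | "m = 2" | "m \<ge> 3" using assms by linarith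
  then show ?thesis
  proof cases
    case 1
    then show ?thesis using ln harm_nonneg[of n] by (simp add: algebra_simps)
  next
    case 2 then show ?thesis by simp
  next
    case 3
    have hq: "harm (n+1-m) \<le> (harm n :: real)" using 3 by (intro harm_mono) auto
    have p: "0 \<le> real n + 3 - real m" using assms by simp
    have "(real n+1)*harm n - (real n + 3 - real m)*harm (n+1-m) - (real m - 2)*harm n
        = (real n + 3 - real m)*(harm n - harm (n+1-m))" by (simp add: algebra_simps)
    also have "\<dots> \<ge> 0" using p hq by simp
    finally have A: "(real m - 2)*harm n \<le> (real n+1)*harm n - (real n + 3 - real m)*harm (n+1-m)" by simp
    have "\<bar>real m - 2\<bar> * ln (real n) = (real m - 2) * ln (real n)" using 3 by simp
    also have "\<dots> \<le> (real m - 2) * harm n" using 3 ln by (intro mult_left_mono) auto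
    finally show ?thesis using A by linarith
  qed
qed

lemma final_ineq: assumes "1 \<le> m" "m \<le> n"
  shows "2 * (\<bar>real m - 2\<bar> * ln (real n) - \<bar>(real m + 2) * harm m - 3\<bar>) / real n \<le> \<bar>F n m / real n - 2\<bar>"
proof -
  define A where "A = (real n+1)*harm n - (real n + 3 - real m)*harm (n+1-m)"
  define B where "B = (real m + 2) * harm m - 3"
  have np: "real n > 0" using assms by simp
  have FX: "F n m / real n - 2 = 2 * (A - B) / real n"
    using np unfolding F_def A_def B_def by (simp add: field_simps)
  have "\<bar>real m - 2\<bar> * ln (real n) - \<bar>B\<bar> \<le> \<bar>A - B\<bar>"
    using keyA[OF assms] unfolding A_def[symmetric] by linarith
  then have "2 * (\<bar>real m - 2\<bar> * ln (real n) - \<bar>B\<bar>) / real n \<le> 2 * \<bar>A - B\<bar> / real n"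
    using np by (intro divide_right_mono) auto
  also have "\<dots> = \<bar>F n m / real n - 2\<bar>" unfolding FX abs_divide abs_mult using np by simp
  finally show ?thesis unfolding B_def .
qed

lemma W_mean: assumes "1 \<le> n"
  shows "(\<integral>x. x \<partial>(W_law n m)) = e n m / real n - 1"
proof -
  have int: "integrable (measure_pmf (quickselect_cmp n m)) real"
    by (rule integrable_measure_pmf_finite) (rule qs_finite)
  have "(\<integral>x. x \<partial>(W_law n m)) = measure_pmf.expectation (quickselect_cmp n m) (\<lambda>c. real c / real n - 1)"
    unfolding W_law_def by simp
  also have "\<dots> = e n m / real n - 1"
    using int unfolding e_def by (simp add: measure_pmf.prob_space)
  finally show ?thesis .
qed

theorem theorem1p3:
  fixes n m :: nat and M :: "real measure"
  assumes "is_dickman M" and "1 \<le> m" and "m \<le> n"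
  shows "wasserstein1 (W_law n m) M \<ge>
           ereal (2 * (\<bar>real m - 2\<bar> * ln (real n) - \<bar>(real m + 2) * harm m - 3\<bar>) / real n)"
proof -
  have DM: "(\<integral>x. x \<partial>M) = 1" using dickman_mean[OF assms(1)] by simp
  have lip: "(\<lambda>x. x) \<in> Lip1" unfolding Lip1_def by simp
  have "ereal \<bar>(\<integral>x. x \<partial>(W_law n m)) - (\<integral>x. x \<partial>M)\<bar> \<le> wasserstein1 (W_law n m) M"
    unfolding wasserstein1_def by (rule SUP_upper2[OF lip]) simp
  moreover have "(\<integral>x. x \<partial>(W_law n m)) - (\<integral>x. x \<partial>M) = F n m / real n - 2"
    using W_mean[of n m] e_eq_F[OF assms(2,3)] DM assms by simp
  ultimately have "ereal \<bar>F n m / real n - 2\<bar> \<le> wasserstein1 (W_law n m) M" by simp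
  moreover have "ereal (2 * (\<bar>real m - 2\<bar> * ln (real n) - \<bar>(real m + 2) * harm m - 3\<bar>) / real n) \<le> ereal \<bar>F n m / real n - 2\<bar>"
    using final_ineq[OF assms(2,3)] by simp
  ultimately show ?thesis by (rule order_trans[rotated])
qed


end
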